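(* Let $C_2\subseteq C_1\subseteq\mathbb{F}_2^n$ be linear codes with bases $\beta_2\subseteq\beta_1$, respectively, and $Q=Q(C_1,C_2)$ the corresponding CSS code. If $N=2^\ell$ ($\ell$ a positive integer), then $$H_N=\left(\beta_2\star\bigcup_{i=0}^{\ell-1}\left(2^i\beta_1^{(i)}\right)\right)^{\perp_N}.$$
   Context: Elements of $\mathbb{F}_2^n$ are identified with vectors in $\{0,1\}^n\subseteq\mathbb{Z}_N^n$. $\omega=e^{2\pi\mathbf{i}/N}$, $U(a)=\mathrm{diag}(1,\omega^a)$ for $a\in\mathbb{Z}_N$ and $U(b)=\bigotimes_{i=1}^nU(b_i)$ for $b\in\mathbb{Z}_N^n$. $Q(C_1,C_2)$ is the subspace of $(\mathbb{C}^2)^{\otimes n}$ stabilized by all $X(u)Z(v)$, $u\in C_2$, $v\in C_1^\perp$, where $X(u)=\bigotimes X^{u_i}$, $Z(v)=\bigotimes Z^{v_i}$ with $X,Z$ the Pauli matrices. $H_N=\{b\in\mathbb{Z}_N^n: U(b)Q=Q\}$. For $u,v\in\mathbb{Z}_N^n$, $u\star v$ is the componentwise product. For a set $A$ of vectors and $r\ge1$, $A^{(r)}=\{v_1\star\cdots\star v_r: v_i\in A,\ v_i\neq v_j \text{ for } i\neq j\}$ and $A^{(0)}=\{(1,\ldots,1)\}$; $2^iA=\{2^ia:a\in A\}$; for sets $A,B$, $A\star B=\{a\star b: a\in A, b\in B\}$; and $A^{\perp_N}=\{w\in\mathbb{Z}_N^n: v\cdot w=0 \bmod N\ \forall v\in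 A\}$. *)

theory Defs
  imports "HOL-Analysis.Analysis" "HOL-Library.Z2"
begin

(* F_2^n is  bit ^ 'n ; Z_N^n is represented by  int ^ 'n  with entries in {0..<N}.
   A state in (C^2)^{\<otimes> n} is a function  bit ^ 'n \<Rightarrow> complex  (coefficients
   in the computational basis |x>, x \<in> {0,1}^n). *)

definition embZ :: "bit ^ 'n \<Rightarrow> int ^ 'n" where
  "embZ x = (\<chi> i. of_bit (x $ i))"

definition ZN_vecs :: "nat \<Rightarrow> (int ^ 'n) set" where
  "ZN_vecs N = {b. \<forall>i. 0 \<le> b $ i \<and> b $ i < int N}"

definition dotZ :: "int ^ 'n \<Rightarrow> int ^ 'n \<Rightarrow> int" where
  "dotZ v w = (\<Sum>i\<in>UNIV. v $ i * w $ i)"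

definition dotF2 :: "bit ^ 'n \<Rightarrow> bit ^ 'n \<Rightarrow> bit" where
  "dotF2 v w = (\<Sum>i\<in>UNIV. v $ i * w $ i)"

definition dual_code :: "(bit ^ 'n) set \<Rightarrow> (bit ^ 'n) set" where
  "dual_code C = {v. \<forall>c\<in>C. dotF2 v c = 0}"

definition Xop :: "bit ^ 'n \<Rightarrow> (bit ^ 'n \<Rightarrow> complex) \<Rightarrow> (bit ^ 'n \<Rightarrow> complex)" where
  "Xop u \<psi> = (\<lambda>x. \<psi> (x + u))"

definition Zop :: "bit ^ 'n \<Rightarrow> (bit ^ 'n \<Rightarrow> complex) \<Rightarrow> (bit ^ 'n \<Rightarrow> complex)" where
  "Zop v \<psi> = (\<lambda>x. (if dotF2 v x = 0 then 1 else -1) * \<psi> x)"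

definition CSS :: "(bit ^ 'n) set \<Rightarrow> (bit ^ 'n) set \<Rightarrow> (bit ^ 'n \<Rightarrow> complex) set" where
  "CSS C1 C2 = {\<psi>. \<forall>u\<in>C2. \<forall>v\<in>dual_code C1. Xop u (Zop v \<psi>) = \<psi>}"

definition omega :: "nat \<Rightarrow> complex" where
  "omega N = exp (2 * pi * \<i> / of_nat N)"

(* U(b) = tensor of diag(1, omega^{b_i}):  U(b)|x> = omega^{b.x}|x> *)
definition Uop :: "nat \<Rightarrow> int ^ 'n \<Rightarrow> (bit ^ 'n \<Rightarrow> complex) \<Rightarrow> (bit ^ 'n \<Rightarrow> complex)" where
  "Uop N b \<psi> = (\<lambda>x. omega N powi (dotZ b (embZ x)) * \<psi> x)"

definition H_N :: "nat \<Rightarrow> (bit ^ 'n) set \<Rightarrow> (bit ^ 'n) set \<Rightarrow> (int ^ 'n) set" where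
  "H_N N C1 C2 = {b \<in> ZN_vecs N. Uop N b ` CSS C1 C2 = CSS C1 C2}"

definition starN :: "nat \<Rightarrow> int ^ 'n \<Rightarrow> int ^ 'n \<Rightarrow> int ^ 'n" where
  "starN N u v = (\<chi> i. (u $ i * v $ i) mod int N)"

definition star_set :: "nat \<Rightarrow> (int ^ 'n) set \<Rightarrow> (int ^ 'n) set \<Rightarrow> (int ^ 'n) set" where
  "star_set N A B = {starN N a b | a b. a \<in> A \<and> b \<in> B}"

definition rprod :: "nat \<Rightarrow> (int ^ 'n) set \<Rightarrow> nat \<Rightarrow> (int ^ 'n) set" where
  "rprod N A r = {fold (starN N) vs (\<chi> i. 1) | vs. length vs = r \<and> distinct vs \<and> set vs \<subseteq> A}"

definition scale_set :: "nat \<Rightarrow> int \<Rightarrow> (int ^ 'n) set \<Rightarrow> (int ^ 'n) set" where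
  "scale_set N c A = {(\<chi> i. (c * a $ i) mod int N) | a. a \<in> A}"

definition perpN :: "nat \<Rightarrow> (int ^ 'n) set \<Rightarrow> (int ^ 'n) set" where
  "perpN N A = {w \<in> ZN_vecs N. \<forall>v\<in>A. dotZ v w mod int N = 0}"

end

theory Submission
  imports Defs
begin


lemma vsp: "vector_space_pair ((*s) :: bit \<Rightarrow> bit^'n \<Rightarrow> bit^'n) ((*) :: bit \<Rightarrow> bit \<Rightarrow> bit)"
  by (intro vector_space_pair.intro vec.vector_space_axioms vector_space_over_itself.vector_space_axioms)

lemma dual_exists:
  fixes B :: "(bit^'n) set"
  assumes ind: "vec.independent B" and z: "z \<notin> vec.span B"
  shows "\<exists>v. (\<forall>c\<in>vec.span B. dotF2 v c = 0) \<and> dotF2 v z = 1"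
proof -
  have ind2: "vec.independent (insert z B)" using vec.independent_insertI[OF z ind] .
  obtain g where g: "Vector_Spaces.linear ((*s) :: bit \<Rightarrow> bit^'n \<Rightarrow> bit^'n) ((*) :: bit \<Rightarrow> bit \<Rightarrow> bit) g"
     and gB: "\<forall>x\<in>insert z B. g x = (if x = z then 1 else 0)"
    using vector_space_pair.linear_independent_extend[OF vsp ind2, of "\<lambda>x. if x = z then 1 else 0"] by blast
  have mh: "module_hom ((*s) :: bit \<Rightarrow> bit^'n \<Rightarrow> bit^'n) ((*) :: bit \<Rightarrow> bit \<Rightarrow> bit) g"
    using g by (simp add: module_hom_iff_linear)
  define v where "v = (\<chi> j. g (axis j 1))"
  have gv: "g x = dotF2 v x" for x
  proof -
    have "g x = g (\<Sum>i\<in>UNIV. (x$i) *s axis i 1)" by (simp add: basis_expansion)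
    also have "\<dots> = (\<Sum>i\<in>UNIV. x$i * g (axis i 1))"
      by (simp add: module_hom.sum[OF mh] module_hom.scale[OF mh])
    finally show ?thesis unfolding dotF2_def v_def by (simp add: mult.commute conj_commute)
  qed
  have "\<forall>c\<in>vec.span B. g c = 0"
  proof
    fix c assume "c \<in> vec.span B"
    then show "g c = 0"
    proof (induction rule: vec.span_induct_alt)
      case base then show ?case using module_hom.zero[OF mh] by simp
    next
      case (step a x y)
      have "x \<noteq> z" using step z vec.span_base by blast
      then show ?case using step gB module_hom.add[OF mh] module_hom.scale[OF mh] by simp
    qed
  qed
  then show ?thesis using gB gv by (metis insertI1)
qed


lemma omega_powi_eq:
  assumes N: "N > 0"
  shows "(omega N powi k = omega N powi m) \<longleftrightarrow> k mod int N = m mod int N"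
proof -
  define c where "c = 2 * pi * \<i> / of_nat N"
  have o: "omega N powi j = exp (of_int j * c)" for j
    unfolding omega_def c_def by (simp add: exp_power_int)
  have "(omega N powi k = omega N powi m) \<longleftrightarrow> exp (of_int (k - m) * c) = 1"
    unfolding o by (simp add: left_diff_distrib exp_diff)
  also have "\<dots> \<longleftrightarrow> (\<exists>n::int. (real_of_int k - real_of_int m) * (2 * pi) / real N = 2 * real_of_int n * pi)"
    unfolding exp_eq_1 c_def by simp
  also have "\<dots> \<longleftrightarrow> (\<exists>n::int. k - m = n * int N)"
  proof
    assume "\<exists>n::int. (real_of_int k - real_of_int m) * (2 * pi) / real N = 2 * real_of_int n * pi"
    then obtain n :: int where "(real_of_int k - real_of_int m) * (2 * pi) / real N = 2 * real_of_int n * pi" by blast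
    then have "(real_of_int k - real_of_int m) * (2*pi) = (real_of_int n * real N) * (2*pi)"
      using N by (simp add: field_simps)
    then have "real_of_int k - real_of_int m = real_of_int n * real N" by simp
    then have "real_of_int (k - m) = real_of_int (n * int N)" by simp
    then show "\<exists>n::int. k - m = n * int N" by (intro exI[of _ n]) (simp only: of_int_eq_iff)
  next
    assume "\<exists>n::int. k - m = n * int N"
    then obtain n where "k - m = n * int N" by blast
    then show "\<exists>n::int. (real_of_int k - real_of_int m) * (2 * pi) / real N = 2 * real_of_int n * pi"
      using N by (intro exI[of _ n]) (simp add: field_simps)
  qed
  also have "\<dots> \<longleftrightarrow> k mod int N = m mod int N"
    by (metis mod_eq_dvd_iff dvd_def mult.commute)
  finally show ?thesis .
qed

lemma bit_add_self [simp]: "(x::bit) + x = 0"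
  by (metis add_bit_eq_xor xor_self_eq)

lemma bitvec_add_self [simp]: "(x::bit^'n) + x = 0"
  by (simp add: vec_eq_iff)

lemma bitvec_times2 [simp]: "(x::bit^'n) * 2 = 0"
  by (simp add: vec_eq_iff)

definition condH :: "nat \<Rightarrow> (bit^'n) set \<Rightarrow> (bit^'n) set \<Rightarrow> int^'n \<Rightarrow> bool" where
  "condH N C1 C2 b \<longleftrightarrow> (\<forall>y\<in>C1. \<forall>c\<in>C2. dotZ b (embZ (y+c)) mod int N = dotZ b (embZ y) mod int N)"

lemma support:
  assumes ind: "vec.independent \<beta>1" and sp: "vec.span \<beta>1 = C1" and s2: "vec.subspace C2"
    and psi: "\<psi> \<in> CSS C1 C2" and nz: "\<psi> z \<noteq> 0"
  shows "z \<in> C1"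
proof (rule ccontr)
  assume "z \<notin> C1"
  then obtain v where v: "\<forall>c\<in>C1. dotF2 v c = 0" "dotF2 v z = 1"
    using dual_exists[OF ind, of z] sp by auto
  have "v \<in> dual_code C1" using v unfolding dual_code_def by blast
  moreover have "0 \<in> C2" using s2 by (simp add: vec.subspace_0)
  ultimately have "Xop 0 (Zop v \<psi>) = \<psi>" using psi unfolding CSS_def by blast
  then have "Xop 0 (Zop v \<psi>) z = \<psi> z" by simp
  then have "- \<psi> z = \<psi> z" using v(2) by (simp add: Xop_def Zop_def)
  then show False using nz by (simp add: minus_equation_iff)
qed

lemma preserve:
  assumes ind: "vec.independent \<beta>1" and sp: "vec.span \<beta>1 = C1" and s2: "vec.subspace C2"
    and N: "N > 0" and cb: "condH N C1 C2 b" and psi: "\<psi> \<in> CSS C1 C2"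
  shows "Uop N b \<psi> \<in> CSS C1 C2"
  unfolding CSS_def
proof (intro CollectI ballI ext)
  fix u v z assume u: "u \<in> C2" and v: "v \<in> dual_code C1"
  define s :: complex where "s = (if dotF2 v (z + u) = 0 then 1 else -1)"
  have h: "s * \<psi> (z + u) = \<psi> z"
    using fun_cong[OF bspec[OF bspec[OF psi[unfolded CSS_def, THEN CollectD] u] v], of z]
    by (simp add: Xop_def Zop_def s_def)
  have lhs: "Xop u (Zop v (Uop N b \<psi>)) z = omega N powi (dotZ b (embZ (z+u))) * (s * \<psi> (z + u))"
    by (simp add: Xop_def Zop_def Uop_def s_def)
  show "Xop u (Zop v (Uop N b \<psi>)) z = Uop N b \<psi> z"
  proof (cases "\<psi> z = 0")
    case True then show ?thesis using lhs h by (simp add: Uop_def)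
  next
    case False
    then have "z \<in> C1" using support[OF ind sp s2 psi] by blast
    then have "dotZ b (embZ (z+u)) mod int N = dotZ b (embZ z) mod int N" using cb u unfolding condH_def by blast
    then have "omega N powi (dotZ b (embZ (z+u))) = omega N powi (dotZ b (embZ z))"
      using omega_powi_eq[OF N] by blast
    then show ?thesis using lhs h by (simp add: Uop_def)
  qed
qed

lemma omega_nz: "omega N \<noteq> 0" by (simp add: omega_def)

lemma dotZ_neg: "dotZ (-b) x = - dotZ b x"
  by (simp add: dotZ_def sum_negf)

lemma Uop_inv: "Uop N b (Uop N (-b) \<psi>) = \<psi>"
proof
  fix x
  have "omega N powi dotZ b (embZ x) * omega N powi dotZ (- b) (embZ x) = 1"
    by (simp add: dotZ_neg power_int_minus omega_nz)
  then show "Uop N b (Uop N (- b) \<psi>) x = \<psi> x" by (simp add: Uop_def mult.assoc[symmetric])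
qed

lemma condH_neg: "condH N C1 C2 b \<Longrightarrow> condH N C1 C2 (-b)"
  unfolding condH_def dotZ_neg by (metis mod_eq_dvd_iff dvd_minus_iff minus_diff_minus)

lemma H_char:
  fixes C1 C2 :: "(bit^'n) set"
  assumes ind: "vec.independent \<beta>1" and sp: "vec.span \<beta>1 = C1" and s2: "vec.subspace C2"
    and sub: "C2 \<subseteq> C1" and N: "N > 0"
  shows "b \<in> H_N N C1 C2 \<longleftrightarrow> b \<in> ZN_vecs N \<and> condH N C1 C2 b"
proof
  assume "b \<in> ZN_vecs N \<and> condH N C1 C2 b"
  then have bz: "b \<in> ZN_vecs N" and cb: "condH N C1 C2 b" by auto
  have "Uop N b ` CSS C1 C2 = CSS C1 C2"
  proof
    show "Uop N b ` CSS C1 C2 \<subseteq> CSS C1 C2" using preserve[OF ind sp s2 N cb] by blast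
    show "CSS C1 C2 \<subseteq> Uop N b ` CSS C1 C2"
    proof
      fix \<psi> assume "\<psi> \<in> CSS C1 C2"
      then have "Uop N (-b) \<psi> \<in> CSS C1 C2" using preserve[OF ind sp s2 N condH_neg[OF cb]] by blast
      then show "\<psi> \<in> Uop N b ` CSS C1 C2" using Uop_inv[of N b \<psi>] by (metis image_eqI)
    qed
  qed
  then show "b \<in> H_N N C1 C2" using bz unfolding H_N_def by blast
next
  assume H: "b \<in> H_N N C1 C2"
  then have bz: "b \<in> ZN_vecs N" and eq: "Uop N b ` CSS C1 C2 = CSS C1 C2" unfolding H_N_def by auto
  have "condH N C1 C2 b" unfolding condH_def
  proof (intro ballI)
    fix y c assume y: "y \<in> C1" and c: "c \<in> C2"
    define \<psi> :: "bit^'n \<Rightarrow> complex" where "\<psi> = (\<lambda>z. if z + y \<in> C2 then 1 else 0)"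
    have "\<psi> \<in> CSS C1 C2" unfolding CSS_def
    proof (intro CollectI ballI ext)
      fix u v z assume u: "u \<in> C2" and v: "v \<in> dual_code C1"
      have e1: "(z + u + y \<in> C2) = (z + y \<in> C2)"
      proof
        assume "z + u + y \<in> C2"
        then have "(z + u + y) + u \<in> C2" using u s2 vec.subspace_add by blast
        moreover have "(z + u + y) + u = (z + y) + (u + u)" by (simp only: add.assoc add.commute add.left_commute)
        ultimately show "z + y \<in> C2" by simp
      next
        assume "z + y \<in> C2"
        then have "(z + y) + u \<in> C2" using u s2 vec.subspace_add by blast
        moreover have "(z + y) + u = z + u + y" by (simp add: algebra_simps)
        ultimately show "z + u + y \<in> C2" by simp
      qed
      have d: "dotF2 v (z + u) = 0" if "z + y \<in> C2"
      proof -
        have "(z + y) + u \<in> C1" using that u sub s2 vec.subspace_add by blast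
        then have "((z + y) + u) + y \<in> C1"
          using y sp vec.subspace_add vec.subspace_span by metis
        moreover have "((z + y) + u) + y = z + u" by (simp add: algebra_simps)
        ultimately show ?thesis using v unfolding dual_code_def by auto
      qed
      show "Xop u (Zop v \<psi>) z = \<psi> z"
        using e1 d by (simp add: Xop_def Zop_def \<psi>_def)
    qed
    then have "Uop N b \<psi> \<in> CSS C1 C2" using eq by blast
    moreover have "0 \<in> dual_code C1" by (simp add: dual_code_def dotF2_def)
    ultimately have "Xop c (Zop 0 (Uop N b \<psi>)) = Uop N b \<psi>" using c unfolding CSS_def by blast
    then have "Xop c (Zop 0 (Uop N b \<psi>)) y = Uop N b \<psi> y" by simp
    moreover have "y + c + y = c" by (simp add: algebra_simps)
    moreover have "0 \<in> C2" using s2 by (simp add: vec.subspace_0)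
    ultimately have "omega N powi dotZ b (embZ (y + c)) = omega N powi dotZ b (embZ y)"
      using c by (simp add: Xop_def Zop_def Uop_def \<psi>_def dotF2_def)
    then show "dotZ b (embZ (y + c)) mod int N = dotZ b (embZ y) mod int N" using omega_powi_eq[OF N] by blast
  qed
  then show "b \<in> ZN_vecs N \<and> condH N C1 C2 b" using bz by blast
qed



lemma bit_cases: "(x::bit) = 0 \<or> x = 1"
  using bit_not_zero_iff by blast

lemma of_bit_add: "(of_bit (a + c) :: int) - of_bit a = of_bit c * (1 - 2 * of_bit a)"
  using bit_cases[of a] bit_cases[of c] by auto

lemma sgn_add: "(1 - 2 * of_bit (a + c) :: int) = (1 - 2 * of_bit a) * (1 - 2 * of_bit c)"
  using bit_cases[of a] bit_cases[of c] by auto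

lemma sgn_sum:
  assumes "finite S"
  shows "(1 - 2 * of_bit ((\<Sum>S) $ j) :: int) = (\<Prod>s\<in>S. (1 - 2 * of_bit (s $ j)))"
  using assms
proof (induction S rule: finite_induct)
  case empty then show ?case by simp
next
  case (insert x F)
  have "\<Sum>(insert x F) = x + \<Sum>F" using insert.hyps by simp
  then have "(1 - 2 * of_bit ((\<Sum>(insert x F)) $ j) :: int) = (1 - 2 * of_bit (x $ j)) * (1 - 2 * of_bit ((\<Sum>F) $ j))"
    by (simp only: vector_add_component sgn_add)
  also have "\<dots> = (1 - 2 * of_bit (x $ j)) * (\<Prod>s\<in>F. (1 - 2 * of_bit (s $ j)))"
    by (simp only: insert.IH)
  finally show ?case by (simp only: prod.insert[OF insert.hyps])
qed

lemma prod_expand: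
  assumes "finite S"
  shows "(\<Prod>s\<in>S. (1 - 2 * of_bit (s $ j)) :: int) =
         (\<Sum>T\<in>Pow S. (-2) ^ card T * (\<Prod>t\<in>T. of_bit (t $ j)))"
proof -
  have "(\<Prod>s\<in>S. (1 - 2 * of_bit (s $ j)) :: int) = (\<Prod>s\<in>S. (-2) * of_bit (s $ j) + 1)"
    by (simp add: algebra_simps)
  also have "\<dots> = (\<Sum>T\<in>Pow S. (\<Prod>t\<in>T. (-2) * of_bit (t $ j)) * (\<Prod>t\<in>S-T. 1))"
    by (rule prod_add[OF assms])
  also have "\<dots> = (\<Sum>T\<in>Pow S. (\<Prod>t\<in>T. (-2)) * (\<Prod>t\<in>T. of_bit (t $ j)))"
    by (simp only: prod.distrib prod.neutral_const mult_1_right)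
  also have "\<dots> = (\<Sum>T\<in>Pow S. (-2) ^ card T * (\<Prod>t\<in>T. of_bit (t $ j)))"
    by (simp only: prod_constant)
  finally show ?thesis .
qed

definition Acoef :: "int^'n \<Rightarrow> bit^'n \<Rightarrow> (bit^'n) set \<Rightarrow> int" where
  "Acoef b g T = (\<Sum>j\<in>UNIV. b $ j * of_bit (g $ j) * (\<Prod>t\<in>T. of_bit (t $ j)))"

lemma embZ_nth [simp]: "embZ x $ j = of_bit (x $ j)"
  by (simp add: embZ_def)

lemma diff_expand:
  assumes "finite S"
  shows "dotZ b (embZ (\<Sum>S + g)) - dotZ b (embZ (\<Sum>S)) = (\<Sum>T\<in>Pow S. (-2) ^ card T * Acoef b g T)"
proof -
  have "dotZ b (embZ (\<Sum>S + g)) - dotZ b (embZ (\<Sum>S)) =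
        (\<Sum>j\<in>UNIV. b $ j * (of_bit (((\<Sum>S) $ j) + g $ j) - of_bit ((\<Sum>S) $ j)))"
    by (simp add: dotZ_def sum_subtractf right_diff_distrib)
  also have "\<dots> = (\<Sum>j\<in>UNIV. b $ j * of_bit (g $ j) * (1 - 2 * of_bit ((\<Sum>S) $ j)))"
    by (rule sum.cong[OF refl]) (simp only: of_bit_add mult.assoc)
  also have "\<dots> = (\<Sum>j\<in>UNIV. b $ j * of_bit (g $ j) * (\<Sum>T\<in>Pow S. (-2) ^ card T * (\<Prod>t\<in>T. of_bit (t $ j))))"
    by (rule sum.cong[OF refl]) (simp only: sgn_sum[OF assms] prod_expand[OF assms])
  also have "\<dots> = (\<Sum>j\<in>UNIV. \<Sum>T\<in>Pow S. (-2) ^ card T * (b $ j * of_bit (g $ j) * (\<Prod>t\<in>T. of_bit (t $ j))))"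
    by (simp add: sum_distrib_left mult.commute mult.left_commute)
  also have "\<dots> = (\<Sum>T\<in>Pow S. \<Sum>j\<in>UNIV. (-2) ^ card T * (b $ j * of_bit (g $ j) * (\<Prod>t\<in>T. of_bit (t $ j))))"
    by (rule sum.swap)
  also have "\<dots> = (\<Sum>T\<in>Pow S. (-2) ^ card T * Acoef b g T)"
    by (simp add: Acoef_def sum_distrib_left)
  finally show ?thesis .
qed

lemma span_repr:
  fixes B :: "(bit^'n) set"
  assumes "y \<in> vec.span B"
  shows "\<exists>S. finite S \<and> S \<subseteq> B \<and> y = \<Sum>S"
  using assms
proof (induction rule: vec.span_induct_alt)
  case base then show ?case by (intro exI[of _ "{}"]) simp
next
  case (step r x y)
  then obtain S where S: "finite S" "S \<subseteq> B" "y = \<Sum>S" by blast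
  show ?case
  proof (cases "r = 0")
    case True then show ?thesis using S by auto
  next
    case False
    then have r: "r = 1" using bit_cases by blast
    show ?thesis
    proof (cases "x \<in> S")
      case True
      have "\<Sum>S = x + \<Sum>(S - {x})" using S True by (simp add: sum.remove)
      then have "x + y = \<Sum>(S - {x})" using S by (simp add: add.assoc[symmetric])
      then show ?thesis using S r by (intro exI[of _ "S - {x}"]) auto
    next
      case False
      then show ?thesis using S r step by (intro exI[of _ "insert x S"]) auto
    qed
  qed
qed



definition condS :: "nat \<Rightarrow> (bit^'n) set \<Rightarrow> (bit^'n) set \<Rightarrow> int^'n \<Rightarrow> bool" where
  "condS N \<beta>1 \<beta>2 b \<longleftrightarrow> (\<forall>g\<in>\<beta>2. \<forall>S. finite S \<longrightarrow> S \<subseteq> \<beta>1 \<longrightarrow>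
      int N dvd (\<Sum>T\<in>Pow S. (-2) ^ card T * Acoef b g T))"

definition condP :: "nat \<Rightarrow> (bit^'n) set \<Rightarrow> (bit^'n) set \<Rightarrow> int^'n \<Rightarrow> bool" where
  "condP N \<beta>1 \<beta>2 b \<longleftrightarrow> (\<forall>g\<in>\<beta>2. \<forall>S. finite S \<longrightarrow> S \<subseteq> \<beta>1 \<longrightarrow>
      int N dvd (2 ^ card S * Acoef b g S))"

lemma neg2_pow: "((-2::int) ^ k) * A = (-1) ^ k * (2 ^ k * A)"
  by (subst power_minus) (rule mult.assoc)

lemma pos2_pow: "((2::int) ^ k) * A = (-1) ^ k * ((-2) ^ k * A)"
proof -
  have "(-1::int) ^ k * ((-2) ^ k * A) = ((-1) * (-2)) ^ k * A"
    by (simp only: mult.assoc[symmetric] power_mult_distrib)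
  moreover have "(-1::int) * (-2) = 2" by simp
  ultimately show ?thesis by (simp only:)
qed

lemma P_imp_S: "condP N \<beta>1 \<beta>2 b \<Longrightarrow> condS N \<beta>1 \<beta>2 b"
  unfolding condS_def
proof (intro ballI allI impI)
  fix g S assume P: "condP N \<beta>1 \<beta>2 b"
    and g: "g \<in> \<beta>2" and S: "finite S" "S \<subseteq> \<beta>1"
  show "int N dvd (\<Sum>T\<in>Pow S. (-2) ^ card T * Acoef b g T)"
  proof (rule dvd_sum)
    fix T assume T: "T \<in> Pow S"
    then have "T \<subseteq> S" by simp
    then have "finite T" "T \<subseteq> \<beta>1" using S finite_subset by auto
    then have "int N dvd 2 ^ card T * Acoef b g T" using P g unfolding condP_def by blast
    then show "int N dvd (-2) ^ card T * Acoef b g T" by (simp only: neg2_pow dvd_mult)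
  qed
qed

lemma S_imp_P: "condS N \<beta>1 \<beta>2 b \<Longrightarrow> condP N \<beta>1 \<beta>2 b"
  unfolding condP_def
proof (intro ballI allI impI)
  fix g S assume cS: "condS N \<beta>1 \<beta>2 b" and g: "g \<in> \<beta>2" and S: "finite S" "S \<subseteq> \<beta>1"
  show "int N dvd 2 ^ card S * Acoef b g S"
    using S
  proof (induction "card S" arbitrary: S rule: less_induct)
    case less
    have F: "int N dvd (\<Sum>T\<in>Pow S. (-2) ^ card T * Acoef b g T)"
      using cS g less.prems unfolding condS_def by blast
    have split: "(\<Sum>T\<in>Pow S. (-2) ^ card T * Acoef b g T) =
       (-2) ^ card S * Acoef b g S + (\<Sum>T\<in>Pow S - {S}. (-2) ^ card T * Acoef b g T)"
      by (rule sum.remove) (use less.prems in auto)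
    have R: "int N dvd (\<Sum>T\<in>Pow S - {S}. (-2) ^ card T * Acoef b g T)"
    proof (rule dvd_sum)
      fix T assume "T \<in> Pow S - {S}"
      then have "T \<subset> S" by auto
      moreover have "finite T" using \<open>T \<subset> S\<close> less.prems(1) finite_subset by auto
      ultimately have "card T < card S" "finite T" "T \<subseteq> \<beta>1"
        using less.prems psubset_card_mono by auto
      then have "int N dvd 2 ^ card T * Acoef b g T" using less.hyps by blast
      then show "int N dvd (-2) ^ card T * Acoef b g T" by (simp only: neg2_pow dvd_mult)
    qed
    have "int N dvd (-2) ^ card S * Acoef b g S"
      using F unfolding split dvd_add_left_iff[OF R] .
    then show ?case by (simp only: pos2_pow dvd_mult)
  qed
qed


lemma condH_S:
  fixes C1 C2 :: "(bit^'n) set"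
  assumes sp1: "vec.span \<beta>1 = C1" and sp2: "vec.span \<beta>2 = C2" and sub: "\<beta>2 \<subseteq> \<beta>1"
  shows "condH N C1 C2 b \<longleftrightarrow> condS N \<beta>1 \<beta>2 b"
proof
  assume cH: "condH N C1 C2 b"
  show "condS N \<beta>1 \<beta>2 b" unfolding condS_def
  proof (intro ballI allI impI)
    fix g S assume g: "g \<in> \<beta>2" and S: "finite S" "S \<subseteq> \<beta>1"
    have "\<Sum>S \<in> vec.span \<beta>1" using S(2) by (intro vec.span_sum vec.span_base) auto
    then have "\<Sum>S \<in> C1" using sp1 by simp
    moreover have "g \<in> C2" using g sp2 vec.span_base by blast
    ultimately have "dotZ b (embZ (\<Sum>S + g)) mod int N = dotZ b (embZ (\<Sum>S)) mod int N"
      using cH unfolding condH_def by blast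
    then have "int N dvd dotZ b (embZ (\<Sum>S + g)) - dotZ b (embZ (\<Sum>S))"
      by (simp add: mod_eq_dvd_iff)
    then show "int N dvd (\<Sum>T\<in>Pow S. (-2) ^ card T * Acoef b g T)"
      by (simp only: diff_expand[OF S(1)])
  qed
next
  assume cS: "condS N \<beta>1 \<beta>2 b"
  have one: "dotZ b (embZ (y + g)) mod int N = dotZ b (embZ y) mod int N" if y: "y \<in> C1" and g: "g \<in> \<beta>2" for y g
  proof -
    obtain S where S: "finite S" "S \<subseteq> \<beta>1" "y = \<Sum>S" using span_repr y sp1 by blast
    have "int N dvd (\<Sum>T\<in>Pow S. (-2) ^ card T * Acoef b g T)" using cS g S unfolding condS_def by blast
    then have "int N dvd dotZ b (embZ (y + g)) - dotZ b (embZ y)"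
      by (simp only: S(3) diff_expand[OF S(1)])
    then show ?thesis by (simp add: mod_eq_dvd_iff)
  qed
  show "condH N C1 C2 b" unfolding condH_def
  proof (intro ballI)
    fix y c assume y: "y \<in> C1" and c: "c \<in> C2"
    have "c \<in> vec.span \<beta>2" using c sp2 by simp
    then have "\<forall>y\<in>C1. dotZ b (embZ (y + c)) mod int N = dotZ b (embZ y) mod int N"
    proof (induction rule: vec.span_induct_alt)
      case base then show ?case by simp
    next
      case (step r x w)
      show ?case
      proof (cases "r = 0")
        case True then show ?thesis using step by simp
      next
        case False
        then have r: "r = 1" using bit_cases by blast
        show ?thesis
        proof
          fix y assume y: "y \<in> C1"
          have "x \<in> C1" using step(1) sub sp1 vec.span_base by blast
          then have yx: "y + x \<in> C1" using y sp1 by (metis vec.span_add)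
          have "dotZ b (embZ (y + (r *s x + w))) mod int N = dotZ b (embZ ((y + x) + w)) mod int N"
            using r by (simp add: add.assoc)
          also have "\<dots> = dotZ b (embZ (y + x)) mod int N" using step(2) yx by blast
          also have "\<dots> = dotZ b (embZ y) mod int N" using one[OF y step(1)] .
          finally show "dotZ b (embZ (y + (r *s x + w))) mod int N = dotZ b (embZ y) mod int N" .
        qed
      qed
    qed
    then show "dotZ b (embZ (y + c)) mod int N = dotZ b (embZ y) mod int N" using y by blast
  qed
qed



lemma embZ_inj: "embZ x = embZ y \<Longrightarrow> x = y"
proof -
  assume e: "embZ x = embZ y"
  have "x $ j = y $ j" for j
  proof -
    have "embZ x $ j = embZ y $ j" using e by simp
    then have "(of_bit (x $ j) :: int) = of_bit (y $ j)" by (simp only: embZ_nth)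
    then show ?thesis using bit_cases[of "x $ j"] bit_cases[of "y $ j"] by auto
  qed
  then show "x = y" by (simp add: vec_eq_iff)
qed

lemma fold_nth:
  "fold (starN N) vs z $ j mod int N = (z $ j * prod_list (map (\<lambda>v. v $ j) vs)) mod int N"
proof (induction vs arbitrary: z)
  case Nil then show ?case by simp
next
  case (Cons x xs)
  have "fold (starN N) (x # xs) z $ j mod int N = fold (starN N) xs (starN N x z) $ j mod int N" by simp
  also have "\<dots> = (starN N x z $ j * prod_list (map (\<lambda>v. v $ j) xs)) mod int N" by (rule Cons.IH)
  also have "\<dots> = (((x $ j * z $ j) mod int N) * prod_list (map (\<lambda>v. v $ j) xs)) mod int N"
    by (simp add: starN_def)
  also have "\<dots> = (x $ j * z $ j * prod_list (map (\<lambda>v. v $ j) xs)) mod int N"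
    by (rule mod_mult_left_eq)
  also have "\<dots> = (z $ j * prod_list (map (\<lambda>v. v $ j) (x # xs))) mod int N"
    by (simp add: ac_simps)
  finally show ?case .
qed

lemma dot_mod:
  assumes "\<forall>j. v $ j mod int N = w $ j mod int N"
  shows "dotZ v b mod int N = dotZ w b mod int N"
proof -
  have e: "(v $ j * b $ j) mod int N = (w $ j * b $ j) mod int N" for j
  proof -
    have "(v $ j * b $ j) mod int N = ((v $ j mod int N) * b $ j) mod int N" by (simp only: mod_mult_left_eq)
    also have "\<dots> = ((w $ j mod int N) * b $ j) mod int N" using assms by simp
    also have "\<dots> = (w $ j * b $ j) mod int N" by (simp only: mod_mult_left_eq)
    finally show ?thesis .
  qed
  have "dotZ v b mod int N = (\<Sum>j\<in>UNIV. (v $ j * b $ j) mod int N) mod int N"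
    unfolding dotZ_def by (simp only: mod_sum_eq)
  also have "\<dots> = (\<Sum>j\<in>UNIV. (w $ j * b $ j) mod int N) mod int N" by (simp only: e)
  also have "\<dots> = dotZ w b mod int N"
    unfolding dotZ_def by (simp only: mod_sum_eq)
  finally show ?thesis .
qed

definition Vvec :: "nat \<Rightarrow> bit^'n \<Rightarrow> (bit^'n) list \<Rightarrow> int^'n" where
  "Vvec N g ws = starN N (embZ g)
     (\<chi> j. (2 ^ length ws * fold (starN N) (map embZ ws) (\<chi> i. 1) $ j) mod int N)"

lemma V_dot:
  fixes g :: "bit^'n" and ws :: "(bit^'n) list" and b :: "int^'n"
  assumes d: "distinct ws"
  shows "dotZ (Vvec N g ws) b mod int N = (2 ^ length ws * Acoef b g (set ws)) mod int N"
proof -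
  define k where "k = length ws"
  define w :: "int^'n" where "w = (\<chi> j. 2 ^ k * (of_bit (g $ j) * (\<Prod>t\<in>set ws. of_bit (t $ j))))"
  have "Vvec N g ws $ j mod int N = w $ j mod int N" for j
  proof -
    define F where "F = fold (starN N) (map embZ ws) (\<chi> i. 1) $ j"
    have pl: "prod_list (map (\<lambda>v. v $ j) (map embZ ws)) = (\<Prod>t\<in>set ws. (of_bit (t $ j) :: int))"
      using d by (simp add: prod.distinct_set_conv_list comp_def)
    have F: "F mod int N = (\<Prod>t\<in>set ws. (of_bit (t $ j) :: int)) mod int N"
      unfolding F_def fold_nth pl by simp
    have "Vvec N g ws $ j = (embZ g $ j * ((2 ^ k * F) mod int N)) mod int N"
      unfolding Vvec_def starN_def F_def k_def by simp
    then have "Vvec N g ws $ j mod int N = (embZ g $ j * ((2 ^ k * F) mod int N)) mod int N"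
      by simp
    also have "\<dots> = (embZ g $ j * (2 ^ k * F)) mod int N"
      by (simp only: mod_mult_right_eq)
    also have "\<dots> = ((embZ g $ j * 2 ^ k) * F) mod int N"
      by (simp only: mult.assoc)
    also have "\<dots> = ((embZ g $ j * 2 ^ k) * (F mod int N)) mod int N"
      by (simp only: mod_mult_right_eq)
    also have "\<dots> = ((embZ g $ j * 2 ^ k) * ((\<Prod>t\<in>set ws. (of_bit (t $ j) :: int)) mod int N)) mod int N"
      by (simp only: F)
    also have "\<dots> = (embZ g $ j * 2 ^ k * (\<Prod>t\<in>set ws. (of_bit (t $ j) :: int))) mod int N"
      by (simp only: mod_mult_right_eq)
    also have "\<dots> = w $ j mod int N" by (simp add: w_def mult.commute mult.left_commute)
    finally show ?thesis .
  qed
  then have "dotZ (Vvec N g ws) b mod int N = dotZ w b mod int N" by (intro dot_mod) blast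
  also have "dotZ w b = 2 ^ k * Acoef b g (set ws)"
    unfolding dotZ_def Acoef_def sum_distrib_left by (rule sum.cong[OF refl]) (simp add: w_def ac_simps)
  finally show ?thesis by (simp add: k_def)
qed

lemma RHS_char:
  fixes \<beta>1 \<beta>2 :: "(bit^'n) set"
  assumes N: "N = 2 ^ l"
  shows "(\<forall>v\<in>star_set N (embZ ` \<beta>2) (\<Union>i\<in>{0..<l}. scale_set N (2 ^ i) (rprod N (embZ ` \<beta>1) i)).
            dotZ v b mod int N = 0) \<longleftrightarrow> condP N \<beta>1 \<beta>2 b"
  (is "(\<forall>v\<in>?R. _) \<longleftrightarrow> _")
proof
  assume R: "\<forall>v\<in>?R. dotZ v b mod int N = 0"
  show "condP N \<beta>1 \<beta>2 b" unfolding condP_def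
  proof (intro ballI allI impI)
    fix g S assume g: "g \<in> \<beta>2" and S: "finite S" "S \<subseteq> \<beta>1"
    show "int N dvd 2 ^ card S * Acoef b g S"
    proof (cases "card S < l")
      case True
      obtain ws where ws: "set ws = S" "distinct ws" using finite_distinct_list[OF S(1)] by blast
      have len: "length ws = card S" using ws distinct_card by metis
      have inj: "inj_on embZ X" for X :: "(bit^'n) set" by (rule inj_onI) (rule embZ_inj)
      have d1: "distinct (map embZ ws)" using ws(2) inj by (simp add: distinct_map)
      have s1: "set (map embZ ws) \<subseteq> embZ ` \<beta>1" using ws(1) S(2) by auto
      have l1: "length (map embZ ws) = card S" using len by simp
      have "fold (starN N) (map embZ ws) (\<chi> i. 1) \<in> rprod N (embZ ` \<beta>1) (card S)"
        unfolding rprod_def using d1 s1 l1 by blast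
      then have "(\<chi> j. (2 ^ length ws * fold (starN N) (map embZ ws) (\<chi> i. 1) $ j) mod int N)
                 \<in> scale_set N (2 ^ card S) (rprod N (embZ ` \<beta>1) (card S))"
        unfolding scale_set_def len by blast
      then have "(\<chi> j. (2 ^ length ws * fold (starN N) (map embZ ws) (\<chi> i. 1) $ j) mod int N)
                 \<in> (\<Union>i\<in>{0..<l}. scale_set N (2 ^ i) (rprod N (embZ ` \<beta>1) i))"
        using True by (intro UN_I[of "card S"]) auto
      moreover have "embZ g \<in> embZ ` \<beta>2" using g by blast
      ultimately have "Vvec N g ws \<in> ?R" unfolding Vvec_def star_set_def by blast
      then have "dotZ (Vvec N g ws) b mod int N = 0" using R by blast
      then have "(2 ^ card S * Acoef b g S) mod int N = 0" using V_dot[OF ws(2)] ws len by simp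
      then show ?thesis by (simp add: mod_eq_0_iff_dvd)
    next
      case False
      then have "(2::int) ^ l dvd 2 ^ card S" by (simp add: le_imp_power_dvd)
      then show ?thesis using N by simp
    qed
  qed
next
  assume P: "condP N \<beta>1 \<beta>2 b"
  show "\<forall>v\<in>?R. dotZ v b mod int N = 0"
  proof
    fix v assume "v \<in> ?R"
    then obtain g c i where g: "g \<in> \<beta>2" and i: "i < l" and v: "v = starN N (embZ g) c"
      and c: "c \<in> scale_set N (2 ^ i) (rprod N (embZ ` \<beta>1) i)"
      unfolding star_set_def by auto
    then obtain vs where c': "c = (\<chi> j. (2 ^ i * fold (starN N) vs (\<chi> i. 1) $ j) mod int N)"
      and vs: "length vs = i" "distinct vs" "set vs \<subseteq> embZ ` \<beta>1"
      unfolding scale_set_def rprod_def by auto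
    have "\<forall>x\<in>set vs. \<exists>y. x = embZ y" using vs(3) by auto
    then obtain ws where ws: "vs = map embZ ws" using ex_map_conv[of vs embZ] by blast
    have dws: "distinct ws" using vs(2) ws by (simp add: distinct_map)
    have sws: "set ws \<subseteq> \<beta>1"
    proof
      fix t assume "t \<in> set ws"
      then have "embZ t \<in> embZ ` \<beta>1" using vs(3) ws by auto
      then show "t \<in> \<beta>1" using embZ_inj by blast
    qed
    have lws: "length ws = i" using vs(1) ws by simp
    have "v = Vvec N g ws" unfolding Vvec_def v c' ws lws ..
    then have "dotZ v b mod int N = (2 ^ card (set ws) * Acoef b g (set ws)) mod int N"
      using V_dot[OF dws] by (simp add: distinct_card[OF dws])
    moreover have "int N dvd 2 ^ card (set ws) * Acoef b g (set ws)"
      using P g sws unfolding condP_def by blast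
    ultimately show "dotZ v b mod int N = 0" by (simp add: mod_eq_0_iff_dvd)
  qed
qed

theorem theorem3p2:
  fixes C1 C2 \<beta>1 \<beta>2 :: "(bit ^ 'n) set" and l N :: nat
  assumes "vec.subspace C1" and "vec.subspace C2" and "C2 \<subseteq> C1"
    and "vec.independent \<beta>1" and "vec.span \<beta>1 = C1"
    and "vec.independent \<beta>2" and "vec.span \<beta>2 = C2"
    and "\<beta>2 \<subseteq> \<beta>1"
    and "l > 0" and "N = 2 ^ l"
  shows "H_N N C1 C2 =
           perpN N (star_set N (embZ ` \<beta>2)
             (\<Union>i\<in>{0..<l}. scale_set N (2 ^ i) (rprod N (embZ ` \<beta>1) i)))"
proof (rule set_eqI)
  fix b
  have N: "N > 0" using assms(10) by simp
  have "b \<in> H_N N C1 C2 \<longleftrightarrow> b \<in> ZN_vecs N \<and> condH N C1 C2 b"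
    using H_char[OF assms(4) assms(5) assms(2) assms(3) N] .
  also have "\<dots> \<longleftrightarrow> b \<in> ZN_vecs N \<and> condP N \<beta>1 \<beta>2 b"
    using condH_S[OF assms(5) assms(7) assms(8)] P_imp_S S_imp_P by blast
  also have "\<dots> \<longleftrightarrow> b \<in> perpN N (star_set N (embZ ` \<beta>2)
             (\<Union>i\<in>{0..<l}. scale_set N (2 ^ i) (rprod N (embZ ` \<beta>1) i)))"
    unfolding perpN_def using RHS_char[OF assms(10), of \<beta>2 \<beta>1 b] by blast
  finally show "b \<in> H_N N C1 C2 \<longleftrightarrow> b \<in> perpN N (star_set N (embZ ` \<beta>2)
             (\<Union>i\<in>{0..<l}. scale_set N (2 ^ i) (rprod N (embZ ` \<beta>1) i)))" .
qed


end
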